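(* For every $h>0$, the function $E^h:\mathbb Z^8_h\to\mathbb O$, $E^h(x)=h^{-7}E^1(x/h)$, is a fundamental solution of $D^h$, i.e. $D^hE^h(x)=\delta_0^h(x)$ for every $x\in\mathbb Z^8_h$, where $\delta_0^h(0)=h^{-8}$ and $\delta_0^h(x)=0$ for $x\neq0$.
   Context: $\mathbb O$ is the real octonion algebra with basis $\mathbf e_0=1,\mathbf e_1,\dots,\mathbf e_7$, where $\mathbf e_i\mathbf e_j=-\delta_{ij}+\sum_k\varepsilon_{ijk}\mathbf e_k$ for $1\le i,j\le 7$, $\varepsilon_{ijk}$ totally antisymmetric with $\varepsilon_{ijk}=1$ for $ijk\in\{123,145,176,246,257,347,365\}$; $\overline{\mathbf e}_0=\mathbf e_0$, $\overline{\mathbf e}_l=-\mathbf e_l$ for $l\ge1$. For $h>0$, $\mathbb Z^8_h=(h\mathbb Z)^8$, $e_0,\dots,e_7$ are the standard unit vectors of $\mathbb R^8$, $\partial_l^hf(x)=(f(x+he_l)-f(x-he_l))/(2h)$ and $D^hf=\sum_{l=0}^7\mathbf e_l\,\partial_l^hf$. For $x\in\mathbb Z^8$, $$E^1(x)=-\frac{1}{(2\pi)^8}\int_{[-\pi,\pi]^8} i\Big(\sum_{l=0}^7\overline{\mathbf e}_l\sin u_l\Big)\Big(\sum_{l=0}^7\sin^2u_l\Big)^{-1}e^{i\sum_l u_lx_l}\,du=\frac{1}{(2\pi)^8}\int_{[-\pi,\pi]^8}\frac{\sum_{l=0}^7\overline{\mathbf e}_l\sin u_l}{\sum_{l=0}^7\sin^2u_l}\,\sin\Big(\sum_l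 u_lx_l\Big)du\in\mathbb O,$$ the integral being absolutely convergent. *)

theory Defs
  imports "HOL-Analysis.Analysis"
begin

text \<open>Octonions are represented as coefficient functions nat => real, the
coefficient of basis element e_k being the value at k; only k < 8 is used,
and all octonions produced below vanish for k >= 8.\<close>

type_synonym oct = "nat \<Rightarrow> real"

definition oct_triples :: "(nat \<times> nat \<times> nat) list" where
  "oct_triples = [(1,2,3),(1,4,5),(1,7,6),(2,4,6),(2,5,7),(3,4,7),(3,6,5)]"

definition oct_eps :: "nat \<Rightarrow> nat \<Rightarrow> nat \<Rightarrow> real" where
  "oct_eps i j k =
     (if (i,j,k) \<in> set oct_triples \<or> (j,k,i) \<in> set oct_triples \<or> (k,i,j) \<in> set oct_triples then 1
      else if (j,i,k) \<in> set oct_triples \<or> (i,k,j) \<in> set oct_triples \<or> (k,j,i) \<in> set oct_triples then -1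
      else 0)"

text \<open>Structure constants: e_i e_j = sum_k oct_c i j k e_k.\<close>
definition oct_c :: "nat \<Rightarrow> nat \<Rightarrow> nat \<Rightarrow> real" where
  "oct_c i j k =
     (if i = 0 then (if j = k then 1 else 0)
      else if j = 0 then (if i = k then 1 else 0)
      else if k = 0 then (if i = j then -1 else 0)
      else oct_eps i j k)"

definition oct_mult :: "oct \<Rightarrow> oct \<Rightarrow> oct" where
  "oct_mult a b = (\<lambda>k. if k < 8 then (\<Sum>i<8. \<Sum>j<8. a i * b j * oct_c i j k) else 0)"

definition oct_basis :: "nat \<Rightarrow> oct" where
  "oct_basis l = (\<lambda>k. if k = l then 1 else 0)"

definition unitv :: "nat \<Rightarrow> (nat \<Rightarrow> real)" where
  "unitv l = (\<lambda>j. if j = l then 1 else 0)"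

definition lattice8 :: "real \<Rightarrow> (nat \<Rightarrow> real) set" where
  "lattice8 h = {x. (\<forall>i<8. \<exists>m::int. x i = h * of_int m) \<and> (\<forall>i\<ge>8. x i = 0)}"

definition dpartial :: "real \<Rightarrow> nat \<Rightarrow> ((nat \<Rightarrow> real) \<Rightarrow> oct) \<Rightarrow> (nat \<Rightarrow> real) \<Rightarrow> oct" where
  "dpartial h l f x = (\<lambda>k. (f (\<lambda>j. x j + h * unitv l j) k - f (\<lambda>j. x j - h * unitv l j) k) / (2 * h))"

definition Dh :: "real \<Rightarrow> ((nat \<Rightarrow> real) \<Rightarrow> oct) \<Rightarrow> (nat \<Rightarrow> real) \<Rightarrow> oct" where
  "Dh h f x = (\<lambda>k. \<Sum>l<8. oct_mult (oct_basis l) (dpartial h l f x) k)"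

text \<open>E^1(x) = (2 pi)^(-8) \<integral>_{[-pi,pi]^8} (sum_l conj(e_l) sin u_l) / (sum_l sin^2 u_l) * sin(u.x) du,
componentwise; conj(e_0) = e_0, conj(e_l) = -e_l for l >= 1.\<close>
definition E1 :: "(nat \<Rightarrow> real) \<Rightarrow> oct" where
  "E1 x = (\<lambda>k. if k < 8 then
      (if k = 0 then 1 else -1) / (2 * pi) ^ 8 *
      (LINT u : PiE {..<8} (\<lambda>_. {-pi..pi}) | PiM {..<8} (\<lambda>_. lborel).
         sin (u k) / (\<Sum>l<8. (sin (u l))\<^sup>2) * sin (\<Sum>l<8. u l * x l))
    else 0)"

definition Eh :: "real \<Rightarrow> (nat \<Rightarrow> real) \<Rightarrow> oct" where
  "Eh h x = (\<lambda>k. h powr (-7) * E1 (\<lambda>j. x j / h) k)"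

definition delta0 :: "real \<Rightarrow> (nat \<Rightarrow> real) \<Rightarrow> oct" where
  "delta0 h x = (if (\<forall>j<8. x j = 0) then (\<lambda>k. h powr (-8) * oct_basis 0 k) else (\<lambda>_. 0))"

end

theory Submission
  imports Defs
begin


lemma lin_aux: "(c::real) \<le> 4 * t \<Longrightarrow> a * 6 \<le> c \<Longrightarrow> t - s \<le> a \<Longrightarrow> t / 3 \<le> s"
  by linarith

lemma sin_ge_third: assumes "0 \<le> t" "t \<le> pi/2" shows "t/3 \<le> sin t"
proof -
  have b: "\<bar>sin t - (\<Sum>m<3. sin_coeff m * t ^ m)\<bar> \<le> inverse (fact 3) * \<bar>t\<bar> ^ 3"
    by (rule Maclaurin_sin_bound)
  have s: "(\<Sum>m<3. sin_coeff m * t ^ m) = t"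
    by (simp add: numeral_eq_Suc lessThan_Suc sin_coeff_def)
  have "t \<le> 2" using assms pi_less_4 by linarith
  hence "t^2 \<le> 2^2" using assms by (intro power_mono) auto
  hence "t^2 \<le> 4" by simp
  hence "t^3 \<le> 4*t" using assms by (simp add: power3_eq_cube power2_eq_square mult_right_mono)
  moreover have "\<bar>sin t - t\<bar> * 6 \<le> t^3" using b s assms by (simp add: fact_numeral)
  moreover have "t - sin t \<le> \<bar>sin t - t\<bar>" by linarith
  ultimately show ?thesis by (rule lin_aux)
qed

lemma abs_sin_lower: assumes "\<bar>t\<bar> \<le> pi"
  shows "min \<bar>t\<bar> (pi - \<bar>t\<bar>) / 3 \<le> \<bar>sin t\<bar>"
proof -
  have main: "min u (pi - u) / 3 \<le> sin u" if "0 \<le> u" "u \<le> pi" for u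
  proof (cases "u \<le> pi/2")
    case True thus ?thesis using sin_ge_third[of u] that by auto
  next
    case False
    have "(pi - u)/3 \<le> sin (pi - u)" using sin_ge_third[of "pi-u"] that False by auto
    thus ?thesis by simp
  qed
  show ?thesis
  proof (cases "t \<ge> 0")
    case True thus ?thesis using main[of t] assms by auto
  next
    case False thus ?thesis using main[of "-t"] assms by auto
  qed
qed

definition phi :: "real \<Rightarrow> real" where
  "phi t = indicator {0..pi} t *\<^sub>R t powr (-1/8)"

lemma phi_int: "integrable lborel phi"
proof -
  have "(\<lambda>t. t powr (-1/8::real)) integrable_on {0..pi}"
    by (rule integrable_on_powr_from_0) auto
  hence "(\<lambda>t. t powr (-1/8::real)) absolutely_integrable_on {0..pi}"
    by (subst absolutely_integrable_on_iff_nonneg) auto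
  thus ?thesis unfolding phi_def set_integrable_def absolutely_integrable_on_def
    by (subst (asm) integrable_completion) auto
qed

lemma phi_nonneg: "phi t \<ge> 0" by (simp add: phi_def indicator_def)

definition G1 :: "real \<Rightarrow> real" where
  "G1 t = 3 powr (1/8) * (phi t + phi (-t) + phi (pi - t) + phi (pi + t))"

lemma G1_int: "integrable lborel G1"
proof -
  have a: "integrable lborel (\<lambda>t. phi (-t))"
    using lborel_integrable_real_affine_iff[of "-1" phi 0] phi_int by simp
  have b: "integrable lborel (\<lambda>t. phi (pi - t))"
    using lborel_integrable_real_affine_iff[of "-1" phi pi] phi_int by simp
  have c: "integrable lborel (\<lambda>t. phi (pi + t))"
    using lborel_integrable_real_affine_iff[of "1" phi pi] phi_int by simp
  show ?thesis unfolding G1_def using phi_int a b c by auto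
qed

lemma G1_bound:
  "\<bar>indicator {-pi..pi} t * \<bar>sin t\<bar> powr (-1/8)\<bar> \<le> G1 t"
proof (cases "t \<in> {-pi..pi} \<and> sin t \<noteq> 0")
  case False
  have "G1 t \<ge> 0" unfolding G1_def using phi_nonneg by (intro mult_nonneg_nonneg) (auto intro!: add_nonneg_nonneg)
  with False show ?thesis by (auto simp: indicator_def)
next
  case True
  have key: "\<bar>sin t\<bar> powr (-1/8) \<le> 3 powr (1/8) * y powr (-1/8)" if "0 < y" "y/3 \<le> \<bar>sin t\<bar>" for y
  proof -
    have "\<bar>sin t\<bar> powr (-1/8) \<le> (y/3) powr (-1/8)"
      by (rule powr_mono2') (use that in auto)
    also have "\<dots> = 3 powr (1/8) * y powr (-1/8)"
      using that by (simp add: powr_divide powr_minus divide_simps)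
    finally show ?thesis .
  qed
  have t00: "t \<noteq> 0" "t \<noteq> pi" "t \<noteq> -pi" using True by auto
  hence t0: "t \<noteq> 0" "\<bar>t\<bar> \<noteq> pi" by (auto simp: abs_if)
  have lo: "min \<bar>t\<bar> (pi - \<bar>t\<bar>) / 3 \<le> \<bar>sin t\<bar>" using abs_sin_lower[of t] True by auto
  have pos: "0 < min \<bar>t\<bar> (pi - \<bar>t\<bar>)" using t0 True by auto
  have "\<bar>sin t\<bar> powr (-1/8) \<le> 3 powr (1/8) * (min \<bar>t\<bar> (pi - \<bar>t\<bar>)) powr (-1/8)"
    using key[OF pos lo] .
  also have "\<dots> \<le> 3 powr (1/8) * (phi t + phi (-t) + phi (pi - t) + phi (pi + t))"
  proof -
    have "(min \<bar>t\<bar> (pi - \<bar>t\<bar>)) powr (-1/8) \<le> phi t + phi (-t) + phi (pi - t) + phi (pi + t)"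
    proof (cases "t \<ge> 0")
      case True2: True
      have "(min \<bar>t\<bar> (pi - \<bar>t\<bar>)) powr (-1/8) \<le> phi t + phi (pi - t)"
        using True True2 phi_nonneg[of t] phi_nonneg[of "pi-t"] by (auto simp: phi_def indicator_def min_def)
      thus ?thesis using phi_nonneg[of "-t"] phi_nonneg[of "pi+t"] by linarith
    next
      case False2: False
      have "(min \<bar>t\<bar> (pi - \<bar>t\<bar>)) powr (-1/8) \<le> phi (-t) + phi (pi + t)"
        using True False2 phi_nonneg[of "-t"] phi_nonneg[of "pi+t"] by (auto simp: phi_def indicator_def min_def)
      thus ?thesis using phi_nonneg[of "t"] phi_nonneg[of "pi-t"] by linarith
    qed
    thus ?thesis by (intro mult_left_mono) auto
  qed
  finally show ?thesis using True by (simp add: G1_def indicator_def)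
qed




lemma exp_int_1d:
  fixes n :: int
  shows "integral\<^sup>L lborel (\<lambda>t. indicator {-pi..pi} t *\<^sub>R exp (\<i> * complex_of_real (t * of_int n)))
        = (if n = 0 then complex_of_real (2*pi) else 0)"
proof (cases "n = 0")
  case True
  have "(\<lambda>t. indicator {-pi..pi} t *\<^sub>R (1::complex)) = (\<lambda>t. complex_of_real (indicator {-pi..pi} t))"
    by (auto simp: indicator_def)
  hence "integral\<^sup>L lborel (\<lambda>t. indicator {-pi..pi} t *\<^sub>R (1::complex)) = complex_of_real (measure lborel {-pi..pi})"
    by simp
  also have "measure lborel {-pi..pi} = 2*pi" by (simp add: measure_def)
  finally show ?thesis using True by simp
next
  case False
  define F where "F = (\<lambda>t::real. exp (\<i> * complex_of_real (t * of_int n)) / (\<i> * of_int n))"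
  have "integral\<^sup>L lborel (\<lambda>t. indicator {-pi..pi} t *\<^sub>R exp (\<i> * complex_of_real (t * of_int n))) = F pi - F (-pi)"
  proof (rule integral_FTC_atLeastAtMost)
    show "-pi \<le> pi" by simp
  next
    fix x assume "-pi \<le> x" "x \<le> pi"
    have "((\<lambda>z. exp (\<i> * (z * of_int n)) / (\<i> * of_int n)) has_field_derivative exp (\<i> * complex_of_real (x * of_int n))) (at (complex_of_real x))"
      using False by (auto intro!: derivative_eq_intros simp: field_simps)
    from has_vector_derivative_real_field[OF this]
    show "(F has_vector_derivative exp (\<i> * complex_of_real (x * of_int n))) (at x within {-pi..pi})"
      unfolding F_def by simp
  next
    show "continuous_on {-pi..pi} (\<lambda>t. exp (\<i> * complex_of_real (t * of_int n)))"
      by (intro continuous_intros)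
  qed
  also have "F pi - F (-pi) = 0"
  proof -
    have "exp (\<i> * complex_of_real (pi * of_int n)) = exp (\<i> * complex_of_real ((-pi) * of_int n))"
    proof -
      have e: "exp ((2 * of_int n * pi) * \<i>) = 1" by (rule exp_integer_2pi) auto
      have "exp (\<i> * complex_of_real (pi * of_int n)) = exp ((2 * of_int n * pi) * \<i>) * exp (\<i> * complex_of_real ((-pi) * of_int n))"
      proof -
        have "\<i> * complex_of_real (pi * of_int n) = (2 * of_int n * pi) * \<i> + \<i> * complex_of_real ((-pi) * of_int n)"
          by (simp add: algebra_simps)
        thus ?thesis by (simp only: exp_add)
      qed
      thus ?thesis by (simp only: e mult_1_left)
    qed
    thus ?thesis unfolding F_def by simp
  qed
  finally show ?thesis using False by simp
qed

definition Cube :: "(nat \<Rightarrow> real) set" where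
  "Cube = PiE {..<8} (\<lambda>_. {-pi..pi})"

abbreviation M8 :: "(nat \<Rightarrow> real) measure" where
  "M8 \<equiv> PiM {..<8} (\<lambda>_. lborel)"

lemma indicator_Cube_prod:
  assumes "u \<in> space M8"
  shows "(\<Prod>l<8. indicator {-pi..pi} (u l) :: real) = indicator Cube u"
proof (cases "\<forall>l<8. u l \<in> {-pi..pi}")
  case True
  hence "u \<in> Cube" using assms by (simp add: Cube_def space_PiM PiE_iff)
  moreover have "(\<Prod>l<8. indicator {-pi..pi} (u l) :: real) = (\<Prod>l<(8::nat). 1)"
    by (rule prod.cong) (use True in auto)
  ultimately show ?thesis by simp
next
  case False
  then obtain l where l: "l < 8" "u l \<notin> {-pi..pi}" by blast
  hence "u \<notin> Cube" unfolding Cube_def PiE_iff by (metis lessThan_iff)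
  moreover have "(\<Prod>l<8. indicator {-pi..pi} (u l) :: real) = 0"
    by (rule prod_zero) (use l in \<open>auto simp: indicator_def\<close>)
  ultimately show ?thesis by simp
qed

lemma integral_Re_swap:
  fixes g :: "'a \<Rightarrow> complex"
  assumes "integrable M g"
  shows "integral\<^sup>L M (\<lambda>x. Re (g x)) = Re (integral\<^sup>L M g)"
  by (rule has_bochner_integral_integral_eq, rule has_bochner_integral_Re,
      rule has_bochner_integral_integrable[OF assms])

lemma cos_int8:
  fixes m :: "nat \<Rightarrow> int"
  shows "integral\<^sup>L M8 (\<lambda>u. indicator Cube u * cos (\<Sum>l<8. u l * of_int (m l)))
       = (if \<forall>l<8. m l = 0 then (2*pi)^8 else 0)"
proof -
  interpret product_sigma_finite "\<lambda>_::nat. lborel::real measure" by standard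
  define f where "f = (\<lambda>l t. indicator {-pi..pi} t *\<^sub>R exp (\<i> * complex_of_real (t * of_int (m l))))"
  have intf: "integrable lborel (f l)" for l
  proof -
    have "set_integrable lborel {-pi..pi} (\<lambda>t. exp (\<i> * complex_of_real (t * of_int (m l))))"
      by (intro borel_integrable_atLeastAtMost' continuous_intros)
    thus ?thesis unfolding set_integrable_def f_def .
  qed
  have intP: "integrable M8 (\<lambda>u. \<Prod>l\<in>{..<8}. f l (u l))"
    by (rule product_integrable_prod) (auto intro: intf)
  have P: "integral\<^sup>L M8 (\<lambda>u. \<Prod>l\<in>{..<8}. f l (u l)) = (\<Prod>l\<in>{..<8}. integral\<^sup>L lborel (f l))"
    by (rule product_integral_prod) (auto intro: intf)
  have P2: "(\<Prod>l\<in>{..<8}. integral\<^sup>L lborel (f l)) = (if \<forall>l<8. m l = 0 then complex_of_real ((2*pi)^8) else 0)"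
  proof (cases "\<forall>l<8. m l = 0")
    case True
    hence "(\<Prod>l\<in>{..<8}. integral\<^sup>L lborel (f l)) = (\<Prod>l\<in>{..<8::nat}. complex_of_real (2*pi))"
      using exp_int_1d unfolding f_def by (intro prod.cong) (auto simp: scaleR_conv_of_real)
    thus ?thesis using True by simp
  next
    case False
    then obtain l where l: "l < 8" "m l \<noteq> 0" by blast
    have "(\<Prod>l\<in>{..<8}. integral\<^sup>L lborel (f l)) = 0"
    proof (rule prod_zero)
      show "\<exists>a\<in>{..<8}. integral\<^sup>L lborel (f a) = 0"
        using l exp_int_1d[of "m l"] unfolding f_def by (intro bexI[of _ l]) auto
    qed auto
    thus ?thesis using False by (subst if_not_P) auto
  qed
  have pw: "Re (\<Prod>l\<in>{..<8}. f l (u l)) = indicator Cube u * cos (\<Sum>l<8. u l * of_int (m l))"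
    if u: "u \<in> space M8" for u
  proof -
    have "(\<Prod>l\<in>{..<8}. f l (u l)) = (\<Prod>l\<in>{..<8}. complex_of_real (indicator {-pi..pi} (u l)) * exp (\<i> * complex_of_real (u l * of_int (m l))))"
      by (simp add: f_def scaleR_conv_of_real)
    also have "\<dots> = complex_of_real (\<Prod>l<8. indicator {-pi..pi} (u l)) * (\<Prod>l\<in>{..<8}. exp (\<i> * complex_of_real (u l * of_int (m l))))"
      by (simp add: prod.distrib)
    also have "(\<Prod>l\<in>{..<8}. exp (\<i> * complex_of_real (u l * of_int (m l)))) = exp (\<Sum>l\<in>{..<8}. \<i> * complex_of_real (u l * of_int (m l)))"
      by (simp add: exp_sum)
    also have "(\<Sum>l\<in>{..<8}. \<i> * complex_of_real (u l * of_int (m l))) = \<i> * complex_of_real (\<Sum>l<8. u l * of_int (m l))"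
      by (simp add: sum_distrib_left)
    also have "(\<Prod>l<8. indicator {-pi..pi} (u l) :: real) = indicator Cube u"
      by (rule indicator_Cube_prod[OF u])
    finally have eq: "(\<Prod>l\<in>{..<8}. f l (u l)) = complex_of_real (indicator Cube u) * exp (\<i> * complex_of_real (\<Sum>l<8. u l * of_int (m l)))" .
    show ?thesis unfolding eq cis_conv_exp[symmetric] by simp
  qed
  have "integral\<^sup>L M8 (\<lambda>u. indicator Cube u * cos (\<Sum>l<8. u l * of_int (m l))) = integral\<^sup>L M8 (\<lambda>u. Re (\<Prod>l\<in>{..<8}. f l (u l)))"
    by (rule Bochner_Integration.integral_cong[OF refl]) (simp add: pw)
  also have "\<dots> = Re (integral\<^sup>L M8 (\<lambda>u. \<Prod>l\<in>{..<8}. f l (u l)))"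
    by (rule integral_Re_swap[OF intP])
  also have "\<dots> = (if \<forall>l<8. m l = 0 then (2*pi)^8 else 0)"
    by (simp add: P P2)
  finally show ?thesis .
qed




abbreviation S8 :: "(nat \<Rightarrow> real) \<Rightarrow> real" where
  "S8 u \<equiv> \<Sum>l<8. (sin (u l))\<^sup>2"

lemma Cube_sets: "Cube \<in> sets M8"
  unfolding Cube_def by (rule sets_PiM_I_finite) auto

lemma sin_zero_set_null: "{t::real. sin t = 0} \<in> null_sets lborel"
proof -
  have "{t::real. sin t = 0} = range (\<lambda>i::int. of_int i * pi)"
    by (auto simp: sin_zero_iff_int2)
  thus ?thesis by (simp add: countable_imp_null_set_lborel)
qed

lemma AE_sin: "AE u in M8. u \<in> Cube \<longrightarrow> (\<forall>l<8. sin (u l) \<noteq> 0)"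
proof -
  interpret product_sigma_finite "\<lambda>_::nat. lborel::real measure" by standard
  have "AE u in M8. \<forall>l\<in>{..<8}. u \<in> Cube \<longrightarrow> sin (u l) \<noteq> 0"
  proof (rule AE_finite_allI)
    fix l :: nat assume l: "l \<in> {..<8}"
    define A where "A = (\<lambda>i. if i = l then {t::real. sin t = 0} else {-pi..pi})"
    have As: "A i \<in> sets lborel" for i
      using sin_zero_set_null by (auto simp: A_def null_setsD2)
    have N: "PiE {..<8} A \<in> null_sets M8"
    proof -
      have "emeasure M8 (PiE {..<8} A) = (\<Prod>i\<in>{..<8}. emeasure lborel (A i))"
        by (rule emeasure_PiM) (use As in auto)
      also have "\<dots> = 0"
      proof (rule prod_zero)
        show "\<exists>a\<in>{..<8}. emeasure lborel (A a) = 0"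
          using l sin_zero_set_null by (intro bexI[of _ l]) (auto simp: A_def null_sets_def)
      qed auto
      finally show ?thesis
        by (auto simp: null_sets_def intro!: sets_PiM_I_finite As)
    qed
    show "AE u in M8. u \<in> Cube \<longrightarrow> sin (u l) \<noteq> 0"
      by (rule AE_I'[OF N]) (use l in \<open>auto simp: Cube_def A_def PiE_iff extensional_def\<close>)
  qed auto
  thus ?thesis by eventually_elim auto
qed


lemma sq_le_S8: "l < 8 \<Longrightarrow> (sin (u l))\<^sup>2 \<le> S8 u"
  by (rule member_le_sum) auto

lemma pointwise_bound:
  assumes u: "u \<in> Cube" and nz: "\<forall>l<8. sin (u l) \<noteq> 0" and g: "\<bar>g\<bar> \<le> 1" and k: "k < 8"
  shows "\<bar>sin (u k) / S8 u * g\<bar> \<le> (\<Prod>l<8. G1 (u l))"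
proof -
  define S where "S = S8 u"
  have Spos: "S > 0"
  proof -
    have "(sin (u 0))\<^sup>2 > 0" using nz by simp
    thus ?thesis using sq_le_S8[of 0 u] unfolding S_def by linarith
  qed
  have step1: "\<bar>sin (u l)\<bar> powr (-1/8) \<le> G1 (u l)" if "l < 8" for l
  proof -
    have "u l \<in> {-pi..pi}" using u that by (auto simp: Cube_def PiE_iff)
    thus ?thesis using G1_bound[of "u l"] by (simp add: indicator_def)
  qed
  have step2: "S powr (-1/16) \<le> \<bar>sin (u l)\<bar> powr (-1/8)" if "l < 8" for l
  proof -
    have pos: "\<bar>sin (u l)\<bar> > 0" using nz that by simp
    have "\<bar>sin (u l)\<bar> powr (-1/8) = (\<bar>sin (u l)\<bar> powr 2) powr (-1/16)"
      by (subst powr_powr) simp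
    also have "\<bar>sin (u l)\<bar> powr 2 = (sin (u l))\<^sup>2" using pos by simp
    finally have e: "\<bar>sin (u l)\<bar> powr (-1/8) = ((sin (u l))\<^sup>2) powr (-1/16)" .
    have "S powr (-1/16) \<le> ((sin (u l))\<^sup>2) powr (-1/16)"
      by (rule powr_mono2') (use pos sq_le_S8[OF that, of u] in \<open>auto simp: S_def\<close>)
    thus ?thesis using e by simp
  qed
  have step3: "(\<Prod>l<(8::nat). S powr (-1/16)) \<le> (\<Prod>l<8. G1 (u l))"
    by (rule prod_mono) (use step1 step2 in \<open>auto intro: order_trans\<close>)
  have step4: "(\<Prod>l<(8::nat). S powr (-1/16)) = S powr (-1/2)"
    using Spos by (simp add: powr_power)
  have step5: "\<bar>sin (u k)\<bar> \<le> S powr (1/2)"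
  proof -
    have "\<bar>sin (u k)\<bar> = sqrt ((sin (u k))\<^sup>2)" by simp
    also have "\<dots> \<le> sqrt S" using sq_le_S8[OF k, of u] unfolding S_def by (rule real_sqrt_le_mono)
    finally show ?thesis using Spos by (simp add: powr_half_sqrt)
  qed
  have step6: "S powr (1/2) / S = S powr (-1/2)"
    using Spos powr_diff[of S "1/2" 1] by simp
  have "\<bar>sin (u k) / S * g\<bar> \<le> \<bar>sin (u k)\<bar> / S"
    using Spos g by (simp add: abs_mult divide_simps mult_left_le)
  also have "\<dots> \<le> S powr (1/2) / S"
    using Spos step5 by (simp add: divide_right_mono)
  also have "\<dots> \<le> (\<Prod>l<8. G1 (u l))" using step3 step4 step6 by simp
  finally show ?thesis unfolding S_def .
qed


lemma comp_meas: "j < 8 \<Longrightarrow> (\<lambda>u. u j) \<in> borel_measurable M8"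
  using measurable_component_singleton[of j "{..<8::nat}" "\<lambda>_. lborel"] by simp

lemma S8_meas: "S8 \<in> borel_measurable M8"
  by (intro borel_measurable_sum borel_measurable_power borel_measurable_continuous_on[OF continuous_on_sin[OF continuous_on_id]] comp_meas) auto

lemma prodG_int: "integrable M8 (\<lambda>u. \<Prod>l\<in>{..<8}. G1 (u l))"
proof -
  interpret product_sigma_finite "\<lambda>_::nat. lborel::real measure" by standard
  show ?thesis by (rule product_integrable_prod) (auto intro: G1_int)
qed

lemma F_int:
  assumes k: "k < 8" and gm: "g \<in> borel_measurable M8" and gb: "\<And>u. \<bar>g u\<bar> \<le> 1"
  shows "integrable M8 (\<lambda>u. indicator Cube u * (sin (u k) / S8 u * g u))"
proof (rule Bochner_Integration.integrable_bound[OF prodG_int])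
  show "(\<lambda>u. indicator Cube u * (sin (u k) / S8 u * g u)) \<in> borel_measurable M8"
    by (intro borel_measurable_times borel_measurable_divide borel_measurable_indicator Cube_sets gm S8_meas
        borel_measurable_continuous_on[OF continuous_on_sin[OF continuous_on_id]] comp_meas k)
  show "AE u in M8. norm (indicator Cube u * (sin (u k) / S8 u * g u)) \<le> norm (\<Prod>l\<in>{..<8}. G1 (u l))"
    using AE_sin
  proof eventually_elim
    case (elim u)
    show ?case
    proof (cases "u \<in> Cube")
      case True
      have "\<bar>sin (u k) / S8 u * g u\<bar> \<le> (\<Prod>l<8. G1 (u l))"
        using pointwise_bound[OF True _ gb k] elim True by auto
      thus ?thesis using True by (simp add: indicator_def)
    next
      case False thus ?thesis by simp
    qed
  qed
qed




definition am :: "(nat \<Rightarrow> int) \<Rightarrow> (nat \<Rightarrow> real) \<Rightarrow> real" where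
  "am m u = (\<Sum>j<8. u j * of_int (m j))"

definition Q :: "(nat \<Rightarrow> int) \<Rightarrow> nat \<Rightarrow> nat \<Rightarrow> (nat \<Rightarrow> real) \<Rightarrow> real" where
  "Q m j l u = indicator Cube u * (sin (u j) / S8 u * (sin (u l) * cos (am m u)))"

abbreviation cc :: "nat \<Rightarrow> real" where
  "cc k \<equiv> (if k = 0 then 1 else -1)"

lemma sin_meas: "j < 8 \<Longrightarrow> (\<lambda>u. sin (u j)) \<in> borel_measurable M8"
  by (intro borel_measurable_continuous_on[OF continuous_on_sin[OF continuous_on_id]] comp_meas)

lemma am_meas: "am m \<in> borel_measurable M8"
  unfolding am_def by (intro borel_measurable_sum borel_measurable_times comp_meas borel_measurable_const) auto

lemma Q_int: "j < 8 \<Longrightarrow> l < 8 \<Longrightarrow> integrable M8 (Q m j l)"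
  unfolding Q_def
  by (rule F_int) (auto intro!: borel_measurable_times sin_meas
      borel_measurable_continuous_on[OF continuous_on_cos[OF continuous_on_id]] am_meas
      simp: abs_mult intro: mult_le_one)

lemma E1_eq: "k < 8 \<Longrightarrow> E1 z k = cc k / (2*pi)^8 *
   integral\<^sup>L M8 (\<lambda>u. indicator Cube u * (sin (u k) / S8 u * sin (\<Sum>l<8. u l * z l)))"
  by (simp add: E1_def set_lebesgue_integral_def Cube_def)

lemma E1_diff:
  assumes k: "k < 8" and l: "l < 8"
    and zp: "\<And>u. (\<Sum>i<8. u i * zp i) = am m u + u l"
    and zm: "\<And>u. (\<Sum>i<8. u i * zm i) = am m u - u l"
  shows "E1 zp k - E1 zm k = cc k / (2*pi)^8 * (2 * integral\<^sup>L M8 (Q m k l))"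
proof -
  have ip: "integrable M8 (\<lambda>u. indicator Cube u * (sin (u k) / S8 u * sin (am m u + u l)))"
    by (rule F_int[OF k]) (auto intro!: borel_measurable_continuous_on[OF continuous_on_sin[OF continuous_on_id]]
        borel_measurable_add am_meas comp_meas l)
  have im: "integrable M8 (\<lambda>u. indicator Cube u * (sin (u k) / S8 u * sin (am m u - u l)))"
    by (rule F_int[OF k]) (auto intro!: borel_measurable_continuous_on[OF continuous_on_sin[OF continuous_on_id]]
        borel_measurable_diff am_meas comp_meas l)
  have "E1 zp k - E1 zm k = cc k / (2*pi)^8 *
     (integral\<^sup>L M8 (\<lambda>u. indicator Cube u * (sin (u k) / S8 u * sin (am m u + u l)))
    - integral\<^sup>L M8 (\<lambda>u. indicator Cube u * (sin (u k) / S8 u * sin (am m u - u l))))"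
    using k by (simp add: E1_eq zp zm right_diff_distrib)
  also have "integral\<^sup>L M8 (\<lambda>u. indicator Cube u * (sin (u k) / S8 u * sin (am m u + u l)))
    - integral\<^sup>L M8 (\<lambda>u. indicator Cube u * (sin (u k) / S8 u * sin (am m u - u l)))
    = integral\<^sup>L M8 (\<lambda>u. indicator Cube u * (sin (u k) / S8 u * sin (am m u + u l)) -
         indicator Cube u * (sin (u k) / S8 u * sin (am m u - u l)))"
    by (rule Bochner_Integration.integral_diff[OF ip im, symmetric])
  also have "\<dots> = integral\<^sup>L M8 (\<lambda>u. 2 * Q m k l u)"
    by (rule Bochner_Integration.integral_cong[OF refl]) (simp add: Q_def sin_add sin_diff divide_inverse algebra_simps)
  also have "\<dots> = 2 * integral\<^sup>L M8 (Q m k l)"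
    by simp
  finally show ?thesis .
qed


lemma shift_sum:
  assumes h: "h > 0" and xm: "\<forall>i<8. x i = h * of_int (m i)" and l: "l < 8"
  shows "(\<Sum>i<8. u i * ((x i + h * unitv l i) / h)) = am m u + u l"
    and "(\<Sum>i<8. u i * ((x i - h * unitv l i) / h)) = am m u - u l"
proof -
  have "(\<Sum>i<8. u i * unitv l i) = (\<Sum>i<8. if i = l then u i else 0)"
    by (intro sum.cong) (auto simp: unitv_def)
  also have "\<dots> = u l" using l by simp
  finally have d: "(\<Sum>i<8. u i * unitv l i) = u l" .
  have "(\<Sum>i<8. u i * ((x i + h * unitv l i) / h)) = (\<Sum>i<8. u i * of_int (m i) + u i * unitv l i)"
    using h xm by (intro sum.cong) (auto simp: field_simps)
  also have "\<dots> = am m u + u l" using d by (simp add: sum.distrib am_def)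
  finally show "(\<Sum>i<8. u i * ((x i + h * unitv l i) / h)) = am m u + u l" .
  have "(\<Sum>i<8. u i * ((x i - h * unitv l i) / h)) = (\<Sum>i<8. u i * of_int (m i) - u i * unitv l i)"
    using h xm by (intro sum.cong) (auto simp: field_simps)
  also have "\<dots> = am m u - u l" using d by (simp add: sum_subtractf am_def)
  finally show "(\<Sum>i<8. u i * ((x i - h * unitv l i) / h)) = am m u - u l" .
qed

lemma arith_aux0: "(h::real) > 0 \<Longrightarrow> a * (c * (2*K)) / (2*h) = a / h * c * K"
  by (simp add: field_simps)

lemma arith_aux: "(h::real) > 0 \<Longrightarrow> P = a * (c * (2*K)) / (2*h) \<Longrightarrow> b = a / h \<Longrightarrow> P = b * c * K"
  using arith_aux0 by simp

lemma dpartial_eq: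
  assumes h: "h > 0" and xm: "\<forall>i<8. x i = h * of_int (m i)" and l: "l < 8" and k: "k < 8"
  shows "dpartial h l (Eh h) x k = h powr (-8) * (cc k / (2*pi)^8) * integral\<^sup>L M8 (Q m k l)"
proof -
  have "dpartial h l (Eh h) x k = h powr (-7) * (E1 (\<lambda>j. (x j + h * unitv l j) / h) k - E1 (\<lambda>j. (x j - h * unitv l j) / h) k) / (2*h)"
    by (simp add: dpartial_def Eh_def right_diff_distrib add_divide_distrib diff_divide_distrib)
  moreover have "E1 (\<lambda>j. (x j + h * unitv l j) / h) k - E1 (\<lambda>j. (x j - h * unitv l j) / h) k
      = cc k / (2*pi)^8 * (2 * integral\<^sup>L M8 (Q m k l))"
    by (rule E1_diff[OF k l shift_sum(1)[OF h xm l] shift_sum(2)[OF h xm l]])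
  moreover have "h powr (-8) = h powr (-7) / h"
    using h powr_diff[of h "-7" 1] by simp
  ultimately show ?thesis using h by (intro arith_aux[of h]) auto
qed


lemma alg: "k<8 \<Longrightarrow> (\<Sum>l<8. \<Sum>j<8. ((if j=0 then 1 else -1) * s j * s l) * oct_c l j k) = (if k=0 then (\<Sum>l<8. (s l)^2) else (0::real))"
  by (simp add: numeral_eq_Suc lessThan_Suc oct_c_def oct_eps_def oct_triples_def less_Suc_eq)

lemma oct_mult_basis:
  assumes "l < 8" "k < 8"
  shows "oct_mult (oct_basis l) b k = (\<Sum>j<8. b j * oct_c l j k)"
proof -
  have "oct_mult (oct_basis l) b k = (\<Sum>i<8. \<Sum>j<8. (if i = l then 1 else 0) * b j * oct_c i j k)"
    using assms by (simp add: oct_mult_def oct_basis_def)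
  also have "\<dots> = (\<Sum>i<8. if i = l then (\<Sum>j<8. b j * oct_c i j k) else 0)"
    by (intro sum.cong) auto
  also have "\<dots> = (\<Sum>j<8. b j * oct_c l j k)" using assms by simp
  finally show ?thesis .
qed

lemma Dh_eq:
  assumes h: "h > 0" and xm: "\<forall>i<8. x i = h * of_int (m i)" and k: "k < 8"
  shows "Dh h (Eh h) x k = h powr (-8) / (2*pi)^8 *
           integral\<^sup>L M8 (\<lambda>u. \<Sum>l<8. \<Sum>j<8. (cc j * oct_c l j k) * Q m j l u)"
proof -
  have "Dh h (Eh h) x k = (\<Sum>l<8. \<Sum>j<8. dpartial h l (Eh h) x j * oct_c l j k)"
    unfolding Dh_def using k by (intro sum.cong) (auto simp: oct_mult_basis)
  also have "\<dots> = (\<Sum>l<8. \<Sum>j<8. h powr (-8) / (2*pi)^8 * ((cc j * oct_c l j k) * integral\<^sup>L M8 (Q m j l)))"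
    using k by (intro sum.cong refl) (simp add: dpartial_eq[OF h xm] field_simps)
  also have "\<dots> = h powr (-8) / (2*pi)^8 * (\<Sum>l<8. \<Sum>j<8. (cc j * oct_c l j k) * integral\<^sup>L M8 (Q m j l))"
    by (simp add: sum_distrib_left)
  also have "(\<Sum>l<8. \<Sum>j<8. (cc j * oct_c l j k) * integral\<^sup>L M8 (Q m j l))
      = integral\<^sup>L M8 (\<lambda>u. \<Sum>l<8. \<Sum>j<8. (cc j * oct_c l j k) * Q m j l u)"
  proof -
    have "integral\<^sup>L M8 (\<lambda>u. \<Sum>l<8. \<Sum>j<8. (cc j * oct_c l j k) * Q m j l u)
        = (\<Sum>l<8. integral\<^sup>L M8 (\<lambda>u. \<Sum>j<8. (cc j * oct_c l j k) * Q m j l u))"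
      by (rule Bochner_Integration.integral_sum) (auto intro!: Bochner_Integration.integrable_sum integrable_mult_right Q_int)
    also have "\<dots> = (\<Sum>l<8. \<Sum>j<8. integral\<^sup>L M8 (\<lambda>u. (cc j * oct_c l j k) * Q m j l u))"
      by (intro sum.cong refl Bochner_Integration.integral_sum) (auto intro!: integrable_mult_right Q_int)
    also have "\<dots> = (\<Sum>l<8. \<Sum>j<8. (cc j * oct_c l j k) * integral\<^sup>L M8 (Q m j l))"
      by simp
    finally show ?thesis by simp
  qed
  finally show ?thesis .
qed

lemma integrand_eq:
  assumes k: "k < 8"
  shows "(\<Sum>l<8. \<Sum>j<8. (cc j * oct_c l j k) * Q m j l u)
       = (if k = 0 then indicator Cube u * cos (am m u) / S8 u * S8 u else 0)"
proof -
  have "(\<Sum>l<8. \<Sum>j<8. (cc j * oct_c l j k) * Q m j l u)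
     = (indicator Cube u * cos (am m u) / S8 u) *
       (\<Sum>l<8. \<Sum>j<8. ((if j=0 then 1 else -1) * sin (u j) * sin (u l)) * oct_c l j k)"
    by (simp add: Q_def sum_distrib_left divide_inverse mult_ac)
  also have "(\<Sum>l<8. \<Sum>j<8. ((if j=0 then 1 else -1) * sin (u j) * sin (u l)) * oct_c l j k)
     = (if k=0 then S8 u else 0)"
    by (rule alg[OF k])
  finally show ?thesis by simp
qed

lemma final_int:
  "integral\<^sup>L M8 (\<lambda>u. indicator Cube u * cos (am m u) / S8 u * S8 u)
     = (if \<forall>l<8. m l = 0 then (2*pi)^8 else 0)"
proof -
  have "integral\<^sup>L M8 (\<lambda>u. indicator Cube u * cos (am m u) / S8 u * S8 u)
      = integral\<^sup>L M8 (\<lambda>u. indicator Cube u * cos (am m u))"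
  proof (rule integral_cong_AE)
    show "(\<lambda>u. indicator Cube u * cos (am m u) / S8 u * S8 u) \<in> borel_measurable M8"
      by (intro borel_measurable_times borel_measurable_divide borel_measurable_indicator Cube_sets S8_meas
          borel_measurable_continuous_on[OF continuous_on_cos[OF continuous_on_id]] am_meas)
    show "(\<lambda>u. indicator Cube u * cos (am m u)) \<in> borel_measurable M8"
      by (intro borel_measurable_times borel_measurable_indicator Cube_sets
          borel_measurable_continuous_on[OF continuous_on_cos[OF continuous_on_id]] am_meas)
    show "AE u in M8. indicator Cube u * cos (am m u) / S8 u * S8 u = indicator Cube u * cos (am m u)"
      using AE_sin
    proof eventually_elim
      case (elim u)
      show ?case
      proof (cases "u \<in> Cube")
        case True
        have "(sin (u 0))\<^sup>2 > 0" using elim True by simp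
        hence "S8 u > 0" using sq_le_S8[of 0 u] by linarith
        thus ?thesis by simp
      qed simp
    qed
  qed
  also have "\<dots> = (if \<forall>l<8. m l = 0 then (2*pi)^8 else 0)"
    using cos_int8[of m] by (simp add: am_def)
  finally show ?thesis .
qed




theorem mainTheorem5:
  fixes h :: real
  assumes "h > 0"
  shows "\<forall>x \<in> lattice8 h. Dh h (Eh h) x = delta0 h x"
proof
  fix x assume x: "x \<in> lattice8 h"
  have "\<forall>i. \<exists>mi::int. i < 8 \<longrightarrow> x i = h * of_int mi" using x by (auto simp: lattice8_def)
  then obtain m :: "nat \<Rightarrow> int" where m: "\<forall>i. i < 8 \<longrightarrow> x i = h * of_int (m i)" by metis
  hence xm: "\<forall>i<8. x i = h * of_int (m i)" by blast
  have mz: "(\<forall>l<8. m l = 0) \<longleftrightarrow> (\<forall>j<8. x j = 0)" using xm assms by auto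
  show "Dh h (Eh h) x = delta0 h x"
  proof (rule ext)
    fix k
    show "Dh h (Eh h) x k = delta0 h x k"
    proof (cases "k < 8")
      case True
      have D: "Dh h (Eh h) x k = h powr (-8) / (2*pi)^8 *
          integral\<^sup>L M8 (\<lambda>u. if k = 0 then indicator Cube u * cos (am m u) / S8 u * S8 u else 0)"
        using Dh_eq[OF assms xm True] by (simp add: integrand_eq[OF True])
      show ?thesis
      proof (cases "k = 0")
        case True
        have "Dh h (Eh h) x k = h powr (-8) / (2*pi)^8 * (if \<forall>l<8. m l = 0 then (2*pi)^8 else 0)"
          using D True final_int[of m] by simp
        thus ?thesis using True mz by (cases "\<forall>j<8. x j = 0") (auto simp: delta0_def oct_basis_def power_mult_distrib)
      next
        case False
        thus ?thesis using D by (simp add: delta0_def oct_basis_def)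
      qed
    next
      case False
      thus ?thesis by (simp add: Dh_def oct_mult_def delta0_def oct_basis_def)
    qed
  qed
qed


end
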